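(* Let $M$ be a finite abelian group of order $m$, $J$ a Jacobi function on $M$, $c\in\hat{M}$ with $c^2=1$, and $i\colon\hat{M}\setminus\{c\}\to\hat{M}\setminus\{1\}$ a bijection with $i(x)=x\,i(x^{-1})$ for all $x\ne c$, such that $J(\alpha,\beta)=\frac{1}{m}\sum_{x\in\hat{M}\setminus\{c\}}\alpha(i(x))\beta(i(x)x^{-1})$ for all $\alpha,\beta\in M$. Let $F=\hat{M}\sqcup\{0\}$ with the operation $\oplus$ for which $0$ is the identity and, for $x,y\ne0$, $x\oplus y=0$ if $x=cy$ and $x\oplus y=x\,i(x/y)^{-1}$ otherwise. Then $\oplus$ is associative on $F$.
   Context: $\hat{M}$ is the Pontryagin dual of $M$, written multiplicatively with identity $1$; for $\alpha\in M$, $x\in\hat{M}$, $\alpha(x)$ is the value of the character $x$ at $\alpha$. $\delta(\alpha)=1$ if $\alpha$ is the identity of $M$ and $0$ otherwise. A Jacobi function on $M$ is a function $J\colon M\times M\to\mathbf{C}$ satisfying: (A) $J(\alpha,\beta)=J(\beta,\alpha)$; (B) with $J^*(\alpha,\beta)=-\delta(\alpha)-\delta(\beta)+J(\alpha,\beta)$, $J^*(\alpha,\beta)J^*(\alpha\beta,\gamma)=J^*(\alpha,\beta\gamma)J^*(\beta,\gamma)$; (C) $\sum_{\beta\in M}J(\alpha_1\beta,\alpha_2\beta^{-1})J(\alpha_3\beta,\alpha_4\beta^{-1})=J(\alpha_1\alpha_4,\alpha_2\alpha_3)$; all for all elements of $M$. *)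

theory Defs
  imports Complex_Main
begin

text \<open>The finite abelian group M is modelled as a finite type of class ab_group_add
  (written additively: identity 0, product \<alpha>\<beta> is \<alpha> + \<beta>, inverse is uminus).\<close>

definition character :: "('a::ab_group_add \<Rightarrow> complex) \<Rightarrow> bool" where
  "character \<chi> \<longleftrightarrow> (\<forall>a b. \<chi> (a + b) = \<chi> a * \<chi> b) \<and> \<chi> 0 = 1"

definition dual :: "('a::ab_group_add \<Rightarrow> complex) set" where
  "dual = {\<chi>. character \<chi>}"

definition char_mult :: "('a \<Rightarrow> complex) \<Rightarrow> ('a \<Rightarrow> complex) \<Rightarrow> ('a \<Rightarrow> complex)" where
  "char_mult x y = (\<lambda>a. x a * y a)"

definition char_one :: "'a \<Rightarrow> complex" where
  "char_one = (\<lambda>a. 1)"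

definition char_inv :: "('a \<Rightarrow> complex) \<Rightarrow> ('a \<Rightarrow> complex)" where
  "char_inv x = (\<lambda>a. inverse (x a))"

definition kdelta :: "'a::zero \<Rightarrow> complex" where
  "kdelta a = (if a = 0 then 1 else 0)"

definition Jstar :: "('a::zero \<Rightarrow> 'a \<Rightarrow> complex) \<Rightarrow> 'a \<Rightarrow> 'a \<Rightarrow> complex" where
  "Jstar J a b = - kdelta a - kdelta b + J a b"

definition jacobi_function :: "('a::{finite,ab_group_add} \<Rightarrow> 'a \<Rightarrow> complex) \<Rightarrow> bool" where
  "jacobi_function J \<longleftrightarrow>
     (\<forall>a b. J a b = J b a) \<and>
     (\<forall>a b g. Jstar J a b * Jstar J (a + b) g = Jstar J a (b + g) * Jstar J b g) \<and>
     (\<forall>a1 a2 a3 a4. (\<Sum>b\<in>UNIV. J (a1 + b) (a2 - b) * J (a3 + b) (a4 - b)) = J (a1 + a4) (a2 + a3))"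

text \<open>F = dual \<squnion> {0}, with None playing the role of the adjoined element 0.\<close>

definition Fset :: "('a::ab_group_add \<Rightarrow> complex) option set" where
  "Fset = {None} \<union> Some ` dual"

fun oplus :: "('a \<Rightarrow> complex) \<Rightarrow> (('a \<Rightarrow> complex) \<Rightarrow> ('a \<Rightarrow> complex))
     \<Rightarrow> ('a \<Rightarrow> complex) option \<Rightarrow> ('a \<Rightarrow> complex) option \<Rightarrow> ('a \<Rightarrow> complex) option" where
  "oplus c i None y = y"
| "oplus c i (Some x) None = Some x"
| "oplus c i (Some x) (Some y) =
     (if x = char_mult c y then None
      else Some (char_mult x (char_inv (i (char_mult x (char_inv y))))))"

end

theory Submission
  imports Defs
begin


lemma ch_add: "x \<in> dual \<Longrightarrow> x (a + b) = x a * x b"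
  by (simp add: dual_def character_def)
lemma ch_zero: "x \<in> dual \<Longrightarrow> x 0 = 1"
  by (simp add: dual_def character_def)
lemma ch_nz: "x \<in> dual \<Longrightarrow> x a \<noteq> 0"
proof
  assume x: "x \<in> dual" and "x a = 0"
  have "x (a + (-a)) = x a * x (-a)" using x by (rule ch_add)
  with x \<open>x a = 0\<close> show False by (simp add: ch_zero)
qed
lemma ch_neg: "x \<in> dual \<Longrightarrow> x (-a) = inverse (x a)"
proof -
  assume x: "x \<in> dual"
  have "x (a + (-a)) = x a * x (-a)" using x by (rule ch_add)
  then have "x a * x (-a) = 1" using x by (simp add: ch_zero)
  then show ?thesis using ch_nz[OF x, of a] by (simp add: field_simps)
qed
lemma ch_diff: "x \<in> dual \<Longrightarrow> x (a - b) = x a / x b"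
  using ch_add[of x a "-b"] ch_neg[of x b] by (simp add: divide_inverse)

lemma mult_dual: "x \<in> dual \<Longrightarrow> y \<in> dual \<Longrightarrow> char_mult x y \<in> dual"
  by (simp add: dual_def character_def char_mult_def)
lemma inv_dual: assumes x: "x \<in> dual" shows "char_inv x \<in> dual"
  unfolding dual_def character_def char_inv_def using ch_add[OF x] ch_zero[OF x]
  by (simp add: inverse_mult_distrib)
lemma one_dual: "char_one \<in> dual"
  by (simp add: dual_def character_def char_one_def)

lemma dual_finite: "finite (dual :: ('a::{finite,ab_group_add} \<Rightarrow> complex) set)"
proof -
  define n where "n = card (UNIV :: 'a set)"
  have n1: "1 \<le> n" unfolding n_def by (simp add: Suc_le_eq card_gt_0_iff)
  have pw: "x a ^ n = 1" if x: "x \<in> (dual :: ('a \<Rightarrow> complex) set)" for x a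
  proof -
    have "(\<Prod>b\<in>UNIV. x (b + a)) = (\<Prod>b\<in>UNIV. x b)"
      by (rule prod.reindex_bij_witness[of _ "\<lambda>b. b - a" "\<lambda>b. b + a"]) auto
    moreover have "(\<Prod>b\<in>UNIV. x (b + a)) = (\<Prod>b\<in>UNIV. x b) * x a ^ n"
      using x by (simp add: ch_add prod.distrib n_def)
    moreover have "(\<Prod>b\<in>UNIV. x b) \<noteq> 0" by (simp add: ch_nz[OF x])
    ultimately show ?thesis by simp
  qed
  have "dual \<subseteq> {f. \<forall>a. (a \<in> (UNIV::'a set) \<longrightarrow> f a \<in> {z::complex. z ^ n = 1}) \<and> (a \<notin> UNIV \<longrightarrow> f a = 0)}"
    using pw by auto
  moreover have "finite {f. \<forall>a. (a \<in> (UNIV::'a set) \<longrightarrow> f a \<in> {z::complex. z ^ n = 1}) \<and> (a \<notin> UNIV \<longrightarrow> f a = 0)}"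
  proof (rule finite_set_of_finite_funs)
    show "finite (UNIV :: 'a set)" by simp
    show "finite {z::complex. z ^ n = 1}" by (rule finite_roots_unity[OF n1])
  qed
  ultimately show ?thesis by (rule finite_subset)
qed

lemma ortho1:
  assumes x: "x \<in> (dual :: ('a::{finite,ab_group_add} \<Rightarrow> complex) set)"
  shows "(\<Sum>a\<in>UNIV. x a) = (if x = char_one then of_nat (card (UNIV::'a set)) else 0)"
proof (cases "x = char_one")
  case True then show ?thesis by (simp add: char_one_def)
next
  case False
  then obtain a0 where a0: "x a0 \<noteq> 1" by (auto simp: char_one_def fun_eq_iff)
  have "(\<Sum>b\<in>UNIV. x (b + a0)) = (\<Sum>b\<in>UNIV. x b)"
    by (rule sum.reindex_bij_witness[of _ "\<lambda>b. b - a0" "\<lambda>b. b + a0"]) auto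
  moreover have "(\<Sum>b\<in>UNIV. x (b + a0)) = (\<Sum>b\<in>UNIV. x b) * x a0"
    using x by (simp add: ch_add sum_distrib_right)
  ultimately have "(\<Sum>b\<in>UNIV. x b) * (x a0 - 1) = 0" by (simp add: algebra_simps)
  with a0 False show ?thesis by simp
qed

lemma ortho2:
  assumes x: "x \<in> (dual :: ('a::{finite,ab_group_add} \<Rightarrow> complex) set)" and y: "y \<in> dual"
  shows "(\<Sum>a\<in>UNIV. x a * inverse (y a)) = (if x = y then of_nat (card (UNIV::'a set)) else 0)"
proof -
  have "char_mult x (char_inv y) \<in> dual" using x y by (simp add: mult_dual inv_dual)
  moreover have "(char_mult x (char_inv y) = char_one) = (x = y)"
    using ch_nz[OF y] by (auto simp: fun_eq_iff char_mult_def char_inv_def char_one_def field_simps)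
  ultimately show ?thesis using ortho1[of "char_mult x (char_inv y)"]
    by (simp add: char_mult_def char_inv_def)
qed


lemma sum_inv_ch:
  assumes v: "v \<in> (dual :: ('a::{finite,ab_group_add} \<Rightarrow> complex) set)"
  shows "(\<Sum>b\<in>UNIV. inverse (v b)) = of_nat (card (UNIV::'a set)) * of_bool (v = char_one)"
proof -
  have "char_inv v \<in> dual" using v by (rule inv_dual)
  moreover have "(char_inv v = char_one) = (v = char_one)"
    by (auto simp: fun_eq_iff char_inv_def char_one_def)
  ultimately show ?thesis using ortho1[of "char_inv v"] by (simp add: char_inv_def)
qed

lemma sum_kdelta: "(\<Sum>b\<in>UNIV. kdelta b * f b) = f (0::'a::{finite,ab_group_add})"
proof -
  have "(\<Sum>b\<in>UNIV. kdelta b * f b) = (\<Sum>b\<in>UNIV. if b = 0 then f b else 0)"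
    by (rule sum.cong) (auto simp: kdelta_def)
  then show ?thesis by simp
qed

definition cdiv :: "('a \<Rightarrow> complex) \<Rightarrow> ('a \<Rightarrow> complex) \<Rightarrow> ('a \<Rightarrow> complex)" where
  "cdiv x y = char_mult x (char_inv y)"

lemma cdiv_dual: "x \<in> dual \<Longrightarrow> y \<in> dual \<Longrightarrow> cdiv x y \<in> dual"
  by (simp add: cdiv_def mult_dual inv_dual)

locale JS =
  fixes J :: "'a::{finite,ab_group_add} \<Rightarrow> 'a \<Rightarrow> complex"
    and k :: "'a \<Rightarrow> complex"
    and i :: "('a \<Rightarrow> complex) \<Rightarrow> ('a \<Rightarrow> complex)"
  assumes J: "jacobi_function J"
    and kd: "k \<in> dual" and k2: "char_mult k k = char_one"
    and i_bij: "bij_betw i (dual - {k}) (dual - {char_one})"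
    and i_sym: "\<forall>x\<in>dual - {k}. i x = char_mult x (i (char_inv x))"
    and J_eq: "\<forall>a b. J a b = (1 / of_nat (card (UNIV :: 'a set))) *
                 (\<Sum>x\<in>dual - {k}. i x a * char_mult (i x) (char_inv x) b)"
begin

definition m :: complex where "m = of_nat (card (UNIV :: 'a set))"
definition Q where "Q t = char_mult (i t) (char_inv t)"
definition N where "N u v = (\<Sum>t\<in>dual - {k}. of_bool (i t = u \<and> Q t = v) :: complex)"

lemma m_nz: "m \<noteq> 0" by (simp add: m_def card_gt_0_iff)

lemma fin: "finite (dual - {k})" using dual_finite by simp

lemma Jf: "J a b = (1/m) * (\<Sum>t\<in>dual - {k}. i t a * Q t b)"
  using J_eq by (simp add: m_def Q_def)

lemma P_in: "t \<in> dual - {k} \<Longrightarrow> i t \<in> dual"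
  using i_bij by (auto simp: bij_betw_def)
lemma P_ne: "t \<in> dual - {k} \<Longrightarrow> i t \<noteq> char_one"
  using i_bij by (auto simp: bij_betw_def)
lemma Q_in: "t \<in> dual - {k} \<Longrightarrow> Q t \<in> dual"
  by (simp add: Q_def P_in mult_dual inv_dual)

lemma L1:
  assumes c: "c \<in> dual"
  shows "(\<Sum>g\<in>UNIV. Jstar J s g * inverse (c g)) =
     (\<Sum>t\<in>dual - {k}. of_bool (Q t = c) * i t s) - m * of_bool (c = char_one) * kdelta s - 1"
proof -
  have A: "(\<Sum>g\<in>UNIV. J s g * inverse (c g)) = (\<Sum>t\<in>dual - {k}. of_bool (Q t = c) * i t s)"
  proof -
    have "(\<Sum>g\<in>UNIV. J s g * inverse (c g)) = (\<Sum>g\<in>UNIV. (1/m) * (\<Sum>t\<in>dual - {k}. i t s * (Q t g * inverse (c g))))"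
      by (simp add: Jf sum_distrib_right mult.assoc)
    also have "\<dots> = (1/m) * (\<Sum>g\<in>UNIV. \<Sum>t\<in>dual - {k}. i t s * (Q t g * inverse (c g)))"
      by (rule sum_distrib_left[symmetric])
    also have "\<dots> = (1/m) * (\<Sum>t\<in>dual - {k}. \<Sum>g\<in>UNIV. i t s * (Q t g * inverse (c g)))"
      by (subst sum.swap) (rule refl)
    also have "\<dots> = (1/m) * (\<Sum>t\<in>dual - {k}. i t s * (\<Sum>g\<in>UNIV. Q t g * inverse (c g)))"
      by (simp only: sum_distrib_left)
    also have "\<dots> = (1/m) * (\<Sum>t\<in>dual - {k}. i t s * (if Q t = c then m else 0))"
      by (intro arg_cong[where f="\<lambda>x. (1/m) * x"] sum.cong refl) (simp add: ortho2 Q_in c m_def)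
    also have "\<dots> = (\<Sum>t\<in>dual - {k}. of_bool (Q t = c) * i t s)"
      using m_nz by (simp add: sum_distrib_left, intro sum.cong refl, simp)
    finally show ?thesis .
  qed
  have B: "(\<Sum>g\<in>UNIV. kdelta s * inverse (c g)) = m * of_bool (c = char_one) * kdelta s"
    by (simp add: sum_distrib_left[symmetric] sum_inv_ch c m_def)
  have C: "(\<Sum>g\<in>UNIV. kdelta g * inverse (c g)) = 1"
    by (simp add: sum_kdelta ch_zero c)
  have "(\<Sum>g\<in>UNIV. Jstar J s g * inverse (c g)) =
        (\<Sum>g\<in>UNIV. J s g * inverse (c g)) - (\<Sum>g\<in>UNIV. kdelta s * inverse (c g)) - (\<Sum>g\<in>UNIV. kdelta g * inverse (c g))"
    unfolding sum_subtractf[symmetric] by (intro sum.cong refl) (simp add: Jstar_def algebra_simps)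
  then show ?thesis using A B C by simp
qed

lemma L1':
  assumes a: "a \<in> dual"
  shows "(\<Sum>x\<in>UNIV. Jstar J x s * inverse (a x)) =
     (\<Sum>t\<in>dual - {k}. of_bool (i t = a) * Q t s) - 1 - m * of_bool (a = char_one) * kdelta s"
proof -
  have A: "(\<Sum>g\<in>UNIV. J g s * inverse (a g)) = (\<Sum>t\<in>dual - {k}. of_bool (i t = a) * Q t s)"
  proof -
    have "(\<Sum>g\<in>UNIV. J g s * inverse (a g)) = (\<Sum>g\<in>UNIV. (1/m) * (\<Sum>t\<in>dual - {k}. Q t s * (i t g * inverse (a g))))"
      by (simp add: Jf sum_distrib_right sum_distrib_left mult_ac)
    also have "\<dots> = (1/m) * (\<Sum>g\<in>UNIV. \<Sum>t\<in>dual - {k}. Q t s * (i t g * inverse (a g)))"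
      by (rule sum_distrib_left[symmetric])
    also have "\<dots> = (1/m) * (\<Sum>t\<in>dual - {k}. \<Sum>g\<in>UNIV. Q t s * (i t g * inverse (a g)))"
      by (subst sum.swap) (rule refl)
    also have "\<dots> = (1/m) * (\<Sum>t\<in>dual - {k}. Q t s * (\<Sum>g\<in>UNIV. i t g * inverse (a g)))"
      by (simp only: sum_distrib_left)
    also have "\<dots> = (1/m) * (\<Sum>t\<in>dual - {k}. Q t s * (if i t = a then m else 0))"
      by (intro arg_cong[where f="\<lambda>x. (1/m) * x"] sum.cong refl) (simp add: ortho2 P_in a m_def)
    also have "\<dots> = (\<Sum>t\<in>dual - {k}. of_bool (i t = a) * Q t s)"
      using m_nz by (simp add: sum_distrib_left, intro sum.cong refl, simp)
    finally show ?thesis .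
  qed
  have B: "(\<Sum>g\<in>UNIV. kdelta s * inverse (a g)) = m * of_bool (a = char_one) * kdelta s"
    by (simp add: sum_distrib_left[symmetric] sum_inv_ch a m_def)
  have C: "(\<Sum>g\<in>UNIV. kdelta g * inverse (a g)) = 1"
    by (simp add: sum_kdelta ch_zero a)
  have "(\<Sum>g\<in>UNIV. Jstar J g s * inverse (a g)) =
        (\<Sum>g\<in>UNIV. J g s * inverse (a g)) - (\<Sum>g\<in>UNIV. kdelta g * inverse (a g)) - (\<Sum>g\<in>UNIV. kdelta s * inverse (a g))"
    unfolding sum_subtractf[symmetric] by (intro sum.cong refl) (simp add: Jstar_def algebra_simps)
  then show ?thesis using A B C by simp
qed

lemma L2:
  assumes u: "u \<in> dual" and v: "v \<in> dual"
  shows "(\<Sum>x\<in>UNIV. \<Sum>y\<in>UNIV. Jstar J x y * inverse (u x) * inverse (v y)) =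
     m * N u v - m * of_bool (v = char_one) - m * of_bool (u = char_one)"
proof -
  have "(\<Sum>x\<in>UNIV. \<Sum>y\<in>UNIV. Jstar J x y * inverse (u x) * inverse (v y)) =
        (\<Sum>x\<in>UNIV. inverse (u x) * (\<Sum>y\<in>UNIV. Jstar J x y * inverse (v y)))"
    unfolding sum_distrib_left by (intro sum.cong refl) (simp add: mult_ac)
  also have "\<dots> = (\<Sum>x\<in>UNIV. inverse (u x) * ((\<Sum>t\<in>dual - {k}. of_bool (Q t = v) * i t x) - m * of_bool (v = char_one) * kdelta x - 1))"
    by (simp add: L1 v)
  also have "\<dots> = (\<Sum>t\<in>dual - {k}. of_bool (Q t = v) * (\<Sum>x\<in>UNIV. i t x * inverse (u x)))
       - m * of_bool (v = char_one) * (\<Sum>x\<in>UNIV. kdelta x * inverse (u x)) - (\<Sum>x\<in>UNIV. inverse (u x))"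
  proof -
    have "(\<Sum>x\<in>UNIV. inverse (u x) * ((\<Sum>t\<in>dual - {k}. of_bool (Q t = v) * i t x) - m * of_bool (v = char_one) * kdelta x - 1))
        = (\<Sum>x\<in>UNIV. (\<Sum>t\<in>dual - {k}. of_bool (Q t = v) * (i t x * inverse (u x))) - m * of_bool (v = char_one) * (kdelta x * inverse (u x)) - inverse (u x))"
      by (intro sum.cong refl) (simp add: sum_distrib_left algebra_simps)
    also have "\<dots> = (\<Sum>x\<in>UNIV. \<Sum>t\<in>dual - {k}. of_bool (Q t = v) * (i t x * inverse (u x))) - m * of_bool (v = char_one) * (\<Sum>x\<in>UNIV. kdelta x * inverse (u x)) - (\<Sum>x\<in>UNIV. inverse (u x))"
      by (simp only: sum_subtractf sum_distrib_left[symmetric])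
    also have "(\<Sum>x\<in>UNIV. \<Sum>t\<in>dual - {k}. of_bool (Q t = v) * (i t x * inverse (u x))) = (\<Sum>t\<in>dual - {k}. of_bool (Q t = v) * (\<Sum>x\<in>UNIV. i t x * inverse (u x)))"
      by (subst sum.swap) (simp only: sum_distrib_left)
    finally show ?thesis .
  qed
  also have "(\<Sum>t\<in>dual - {k}. of_bool (Q t = v) * (\<Sum>x\<in>UNIV. i t x * inverse (u x))) = m * N u v"
    unfolding N_def sum_distrib_left
    by (intro sum.cong refl) (auto simp: ortho2 P_in u m_def)
  also have "(\<Sum>x\<in>UNIV. kdelta x * inverse (u x)) = 1"
    by (simp add: sum_kdelta ch_zero u)
  also have "(\<Sum>x\<in>UNIV. inverse (u x)) = m * of_bool (u = char_one)"
    by (simp add: sum_inv_ch u m_def)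
  finally show ?thesis by simp
qed

lemma PQ: "t \<in> dual - {k} \<Longrightarrow> i t x * inverse (Q t x) = t x"
  using ch_nz[OF P_in, of t x] ch_nz[of t x]
  by (simp add: Q_def char_mult_def char_inv_def)

lemma L3:
  assumes w: "w \<in> dual"
  shows "(\<Sum>x\<in>UNIV. Jstar J x (-x) * w x) = of_bool (char_inv w \<noteq> k) - 2"
proof -
  have J1: "J x (-x) = (1/m) * (\<Sum>t\<in>dual - {k}. t x)" for x
    unfolding Jf
  proof (intro arg_cong[where f="\<lambda>y. (1/m) * y"] sum.cong refl)
    fix t assume t: "t \<in> dual - {k}"
    have "Q t (-x) = inverse (Q t x)" by (rule ch_neg[OF Q_in[OF t]])
    then show "i t x * Q t (-x) = t x" using PQ[OF t] by simp
  qed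
  have A: "(\<Sum>x\<in>UNIV. J x (-x) * w x) = of_bool (char_inv w \<noteq> k)"
  proof -
    have "(\<Sum>x\<in>UNIV. J x (-x) * w x) = (\<Sum>x\<in>UNIV. (1/m) * (\<Sum>t\<in>dual - {k}. t x * inverse (char_inv w x)))"
      by (intro sum.cong refl) (simp add: J1 sum_distrib_right char_inv_def)
    also have "\<dots> = (1/m) * (\<Sum>x\<in>UNIV. \<Sum>t\<in>dual - {k}. t x * inverse (char_inv w x))"
      by (rule sum_distrib_left[symmetric])
    also have "\<dots> = (1/m) * (\<Sum>t\<in>dual - {k}. \<Sum>x\<in>UNIV. t x * inverse (char_inv w x))"
      by (subst sum.swap) (rule refl)
    also have "\<dots> = (1/m) * (\<Sum>t\<in>dual - {k}. if t = char_inv w then m else 0)"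
      by (intro arg_cong[where f="\<lambda>y. (1/m) * y"] sum.cong refl) (simp add: ortho2 inv_dual w m_def)
    also have "\<dots> = (1/m) * (if char_inv w \<in> dual - {k} then m else 0)"
      using fin by (simp add: sum.delta')
    also have "\<dots> = of_bool (char_inv w \<noteq> k)"
      using m_nz inv_dual[OF w] by simp
    finally show ?thesis .
  qed
  have kd: "kdelta (-x) = kdelta x" for x :: 'a by (simp add: kdelta_def)
  have "(\<Sum>x\<in>UNIV. Jstar J x (-x) * w x) = (\<Sum>x\<in>UNIV. J x (-x) * w x) - 2 * (\<Sum>x\<in>UNIV. kdelta x * w x)"
  proof -
    have "(\<Sum>x\<in>UNIV. Jstar J x (-x) * w x) = (\<Sum>x\<in>UNIV. J x (-x) * w x - 2 * (kdelta x * w x))"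
      by (intro sum.cong refl) (simp add: Jstar_def kd algebra_simps)
    then show ?thesis by (simp only: sum_subtractf sum_distrib_left[symmetric])
  qed
  then show ?thesis using A by (simp add: sum_kdelta ch_zero w)
qed

lemma kd_shift: "(\<Sum>y\<in>UNIV. F y * kdelta ((x::'a) + y)) = F (-x)"
proof -
  have "(\<Sum>y\<in>UNIV. F y * kdelta (x + y)) = (\<Sum>y\<in>UNIV. if y = -x then F y else 0)"
  proof (rule sum.cong)
    fix y
    have "(x + y = 0) = (y = -x)" by (rule add_eq_0_iff)
    then show "F y * kdelta (x + y) = (if y = -x then F y else 0)" by (simp add: kdelta_def)
  qed simp
  then show ?thesis by simp
qed

lemma swap3s: "(\<Sum>x\<in>A. \<Sum>y\<in>B. \<Sum>s\<in>C. f x y s) = (\<Sum>s\<in>C. \<Sum>x\<in>A. \<Sum>y\<in>B. f x y s)"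
proof -
  have "(\<Sum>x\<in>A. \<Sum>y\<in>B. \<Sum>s\<in>C. f x y s) = (\<Sum>x\<in>A. \<Sum>s\<in>C. \<Sum>y\<in>B. f x y s)"
    by (intro sum.cong refl) (rule sum.swap)
  also have "\<dots> = (\<Sum>s\<in>C. \<Sum>x\<in>A. \<Sum>y\<in>B. f x y s)" by (rule sum.swap)
  finally show ?thesis .
qed

lemma TL:
  assumes a: "a \<in> dual" and b: "b \<in> dual" and c: "c \<in> dual"
  shows "(\<Sum>x\<in>UNIV. \<Sum>y\<in>UNIV. \<Sum>z\<in>UNIV. Jstar J x y * Jstar J (x+y) z * inverse (a x) * inverse (b y) * inverse (c z))
    = (\<Sum>s\<in>dual - {k}. of_bool (Q s = c) * (m * N (cdiv a (i s)) (cdiv b (i s)) - m * of_bool (cdiv b (i s) = char_one) - m * of_bool (cdiv a (i s) = char_one)))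
      - m * of_bool (c = char_one) * (of_bool (char_inv (char_mult (char_inv a) b) \<noteq> k) - 2)
      - (m * N a b - m * of_bool (b = char_one) - m * of_bool (a = char_one))"
proof -
  have "(\<Sum>x\<in>UNIV. \<Sum>y\<in>UNIV. \<Sum>z\<in>UNIV. Jstar J x y * Jstar J (x+y) z * inverse (a x) * inverse (b y) * inverse (c z))
     = (\<Sum>x\<in>UNIV. \<Sum>y\<in>UNIV. Jstar J x y * inverse (a x) * inverse (b y) * (\<Sum>z\<in>UNIV. Jstar J (x+y) z * inverse (c z)))"
    unfolding sum_distrib_left by (intro sum.cong refl) (simp add: mult_ac)
  also have "\<dots> = (\<Sum>x\<in>UNIV. \<Sum>y\<in>UNIV. Jstar J x y * inverse (a x) * inverse (b y) *
       ((\<Sum>s\<in>dual - {k}. of_bool (Q s = c) * i s (x+y)) - m * of_bool (c = char_one) * kdelta (x+y) - 1))"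
    by (simp add: L1 c)
  also have "\<dots> = (\<Sum>x\<in>UNIV. \<Sum>y\<in>UNIV.
       (\<Sum>s\<in>dual - {k}. of_bool (Q s = c) * (Jstar J x y * inverse (cdiv a (i s) x) * inverse (cdiv b (i s) y)))
       - m * of_bool (c = char_one) * (Jstar J x y * inverse (a x) * inverse (b y) * kdelta (x+y))
       - Jstar J x y * inverse (a x) * inverse (b y))"
  proof (intro sum.cong refl)
    fix x y
    have "Jstar J x y * inverse (a x) * inverse (b y) * (\<Sum>s\<in>dual - {k}. of_bool (Q s = c) * i s (x+y))
       = (\<Sum>s\<in>dual - {k}. of_bool (Q s = c) * (Jstar J x y * inverse (cdiv a (i s) x) * inverse (cdiv b (i s) y)))"
      unfolding sum_distrib_left
      by (intro sum.cong refl) (simp add: cdiv_def char_mult_def char_inv_def ch_add P_in ch_nz)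
    then show "Jstar J x y * inverse (a x) * inverse (b y) *
       ((\<Sum>s\<in>dual - {k}. of_bool (Q s = c) * i s (x+y)) - m * of_bool (c = char_one) * kdelta (x+y) - 1) =
       (\<Sum>s\<in>dual - {k}. of_bool (Q s = c) * (Jstar J x y * inverse (cdiv a (i s) x) * inverse (cdiv b (i s) y)))
       - m * of_bool (c = char_one) * (Jstar J x y * inverse (a x) * inverse (b y) * kdelta (x+y))
       - Jstar J x y * inverse (a x) * inverse (b y)"
      by (simp add: algebra_simps)
  qed
  also have "\<dots> = (\<Sum>s\<in>dual - {k}. of_bool (Q s = c) * (\<Sum>x\<in>UNIV. \<Sum>y\<in>UNIV. Jstar J x y * inverse (cdiv a (i s) x) * inverse (cdiv b (i s) y)))
       - m * of_bool (c = char_one) * (\<Sum>x\<in>UNIV. \<Sum>y\<in>UNIV. Jstar J x y * inverse (a x) * inverse (b y) * kdelta (x+y))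
       - (\<Sum>x\<in>UNIV. \<Sum>y\<in>UNIV. Jstar J x y * inverse (a x) * inverse (b y))"
    by (simp only: sum_subtractf sum_distrib_left[symmetric] swap3s)
  also have "(\<Sum>x\<in>UNIV. \<Sum>y\<in>UNIV. Jstar J x y * inverse (a x) * inverse (b y) * kdelta (x+y))
     = (\<Sum>x\<in>UNIV. Jstar J x (-x) * char_mult (char_inv a) b x)"
    by (intro sum.cong refl) (simp add: kd_shift ch_neg b char_mult_def char_inv_def)
  also have "\<dots> = of_bool (char_inv (char_mult (char_inv a) b) \<noteq> k) - 2"
    by (rule L3) (simp add: mult_dual inv_dual a b)
  finally show ?thesis
    by (simp add: L2 a b c cdiv_dual P_in)
qed

lemma swap3: "(\<Sum>x\<in>(UNIV::'b::finite set). \<Sum>y\<in>(UNIV::'c::finite set). \<Sum>z\<in>(UNIV::'d::finite set). f x y z) = (\<Sum>y\<in>UNIV. \<Sum>z\<in>UNIV. \<Sum>x\<in>UNIV. f x y z)"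
proof -
  have "(\<Sum>x\<in>(UNIV::'b set). \<Sum>y\<in>(UNIV::'c set). \<Sum>z\<in>(UNIV::'d set). f x y z) = (\<Sum>y\<in>UNIV. \<Sum>x\<in>UNIV. \<Sum>z\<in>UNIV. f x y z)"
    by (rule sum.swap)
  also have "\<dots> = (\<Sum>y\<in>UNIV. \<Sum>z\<in>UNIV. \<Sum>x\<in>UNIV. f x y z)"
    by (intro sum.cong refl) (rule sum.swap)
  finally show ?thesis .
qed

lemma TR:
  assumes a: "a \<in> dual" and b: "b \<in> dual" and c: "c \<in> dual"
  shows "(\<Sum>x\<in>UNIV. \<Sum>y\<in>UNIV. \<Sum>z\<in>UNIV. Jstar J x (y+z) * Jstar J y z * inverse (a x) * inverse (b y) * inverse (c z))
    = (\<Sum>t\<in>dual - {k}. of_bool (i t = a) * (m * N (cdiv b (Q t)) (cdiv c (Q t)) - m * of_bool (cdiv c (Q t) = char_one) - m * of_bool (cdiv b (Q t) = char_one)))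
      - (m * N b c - m * of_bool (c = char_one) - m * of_bool (b = char_one))
      - m * of_bool (a = char_one) * (of_bool (char_inv (char_mult (char_inv b) c) \<noteq> k) - 2)"
proof -
  have "(\<Sum>x\<in>UNIV. \<Sum>y\<in>UNIV. \<Sum>z\<in>UNIV. Jstar J x (y+z) * Jstar J y z * inverse (a x) * inverse (b y) * inverse (c z))
     = (\<Sum>y\<in>UNIV. \<Sum>z\<in>UNIV. \<Sum>x\<in>UNIV. Jstar J x (y+z) * Jstar J y z * inverse (a x) * inverse (b y) * inverse (c z))"
    by (rule swap3)
  also have "\<dots> = (\<Sum>y\<in>UNIV. \<Sum>z\<in>UNIV. Jstar J y z * inverse (b y) * inverse (c z) * (\<Sum>x\<in>UNIV. Jstar J x (y+z) * inverse (a x)))"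
    unfolding sum_distrib_left by (intro sum.cong refl) (simp add: mult_ac)
  also have "\<dots> = (\<Sum>y\<in>UNIV. \<Sum>z\<in>UNIV. Jstar J y z * inverse (b y) * inverse (c z) *
       ((\<Sum>t\<in>dual - {k}. of_bool (i t = a) * Q t (y+z)) - 1 - m * of_bool (a = char_one) * kdelta (y+z)))"
    by (simp add: L1' a)
  also have "\<dots> = (\<Sum>y\<in>UNIV. \<Sum>z\<in>UNIV.
       (\<Sum>t\<in>dual - {k}. of_bool (i t = a) * (Jstar J y z * inverse (cdiv b (Q t) y) * inverse (cdiv c (Q t) z)))
       - Jstar J y z * inverse (b y) * inverse (c z)
       - m * of_bool (a = char_one) * (Jstar J y z * inverse (b y) * inverse (c z) * kdelta (y+z)))"
  proof (intro sum.cong refl)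
    fix y z
    have "Jstar J y z * inverse (b y) * inverse (c z) * (\<Sum>t\<in>dual - {k}. of_bool (i t = a) * Q t (y+z))
       = (\<Sum>t\<in>dual - {k}. of_bool (i t = a) * (Jstar J y z * inverse (cdiv b (Q t) y) * inverse (cdiv c (Q t) z)))"
      unfolding sum_distrib_left
      by (intro sum.cong refl) (simp add: cdiv_def char_mult_def char_inv_def ch_add Q_in ch_nz)
    then show "Jstar J y z * inverse (b y) * inverse (c z) *
       ((\<Sum>t\<in>dual - {k}. of_bool (i t = a) * Q t (y+z)) - 1 - m * of_bool (a = char_one) * kdelta (y+z)) =
       (\<Sum>t\<in>dual - {k}. of_bool (i t = a) * (Jstar J y z * inverse (cdiv b (Q t) y) * inverse (cdiv c (Q t) z)))
       - Jstar J y z * inverse (b y) * inverse (c z)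
       - m * of_bool (a = char_one) * (Jstar J y z * inverse (b y) * inverse (c z) * kdelta (y+z))"
      by (simp add: algebra_simps)
  qed
  also have "\<dots> = (\<Sum>t\<in>dual - {k}. of_bool (i t = a) * (\<Sum>y\<in>UNIV. \<Sum>z\<in>UNIV. Jstar J y z * inverse (cdiv b (Q t) y) * inverse (cdiv c (Q t) z)))
       - (\<Sum>y\<in>UNIV. \<Sum>z\<in>UNIV. Jstar J y z * inverse (b y) * inverse (c z))
       - m * of_bool (a = char_one) * (\<Sum>y\<in>UNIV. \<Sum>z\<in>UNIV. Jstar J y z * inverse (b y) * inverse (c z) * kdelta (y+z))"
    by (simp only: sum_subtractf sum_distrib_left[symmetric] swap3s)
  also have "(\<Sum>y\<in>UNIV. \<Sum>z\<in>UNIV. Jstar J y z * inverse (b y) * inverse (c z) * kdelta (y+z))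
     = (\<Sum>y\<in>UNIV. Jstar J y (-y) * char_mult (char_inv b) c y)"
    by (intro sum.cong refl) (simp add: kd_shift ch_neg c char_mult_def char_inv_def)
  also have "\<dots> = of_bool (char_inv (char_mult (char_inv b) c) \<noteq> k) - 2"
    by (rule L3) (simp add: mult_dual inv_dual b c)
  finally show ?thesis
    by (simp add: L2 a b c cdiv_dual Q_in)
qed

end

context JS begin
abbreviation op where "op \<equiv> oplus k i"

declare oplus.simps(3)[simp del]

lemma op_SS: "op (Some x) (Some y) = (if x = char_mult k y then None else Some (cdiv x (i (cdiv x y))))"
  by (simp add: cdiv_def oplus.simps(3))

lemma eqk: "x \<in> dual \<Longrightarrow> y \<in> dual \<Longrightarrow> (cdiv x y = k) = (x = char_mult k y)"
  using ch_nz[of y] by (auto simp: fun_eq_iff cdiv_def char_mult_def char_inv_def field_simps)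

lemma cdiv_in: "x \<in> dual \<Longrightarrow> y \<in> dual \<Longrightarrow> x \<noteq> char_mult k y \<Longrightarrow> cdiv x y \<in> dual - {k}"
  using eqk cdiv_dual by auto

lemma op_closed:
  assumes x: "x \<in> dual" and y: "y \<in> dual" and h: "op (Some x) (Some y) = Some e"
  shows "e \<in> dual"
proof -
  have ne: "x \<noteq> char_mult k y" and e: "e = cdiv x (i (cdiv x y))"
    using h by (simp_all add: op_SS split: if_splits)
  show ?thesis unfolding e by (rule cdiv_dual[OF x P_in[OF cdiv_in[OF x y ne]]])
qed

lemma cdiv_one: "z \<in> dual \<Longrightarrow> (cdiv b z = char_one) = (b = z)"
  using ch_nz[of z] by (auto simp: fun_eq_iff cdiv_def char_mult_def char_inv_def char_one_def field_simps)

lemma C1: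
  assumes u: "u \<in> dual" and v: "v \<in> dual"
  shows "N u v = of_bool (op (Some u) (Some v) = Some char_one)"
proof -
  have "N u v = (\<Sum>t\<in>dual - {k}. if t = cdiv u v then of_bool (i (cdiv u v) = u) else 0)"
    unfolding N_def
  proof (intro sum.cong refl)
    fix t assume t: "t \<in> dual - {k}"
    have "(i t = u \<and> Q t = v) = (t = cdiv u v \<and> i (cdiv u v) = u)"
    proof
      assume h: "i t = u \<and> Q t = v"
      have "t = cdiv u v"
      proof (rule ext)
        fix a
        have "v a = Q t a" using h by simp
        also have "Q t a = i t a * inverse (t a)" by (simp add: Q_def char_mult_def char_inv_def)
        also have "i t a = u a" using h by simp
        finally have "v a = u a * inverse (t a)" .
        moreover have va: "v a \<noteq> 0" by (rule ch_nz[OF v])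
        moreover have ta: "t a \<noteq> 0" using t ch_nz by auto
        ultimately have "t a * v a = u a" by (simp add: field_simps)
        then show "t a = cdiv u v a" using va by (simp add: cdiv_def char_mult_def char_inv_def field_simps)
      qed
      then show "t = cdiv u v \<and> i (cdiv u v) = u" using h by simp
    next
      assume h: "t = cdiv u v \<and> i (cdiv u v) = u"
      then have it: "i t = u" by simp
      have "Q t = v"
      proof (rule ext)
        fix a
        show "Q t a = v a" using h it ch_nz[OF u, of a] ch_nz[OF v, of a]
          by (simp add: Q_def cdiv_def char_mult_def char_inv_def)
      qed
      with it show "i t = u \<and> Q t = v" by simp
    qed
    then show "(of_bool (i t = u \<and> Q t = v) :: complex) = (if t = cdiv u v then of_bool (i (cdiv u v) = u) else 0)"
      by auto
  qed
  also have "\<dots> = of_bool (cdiv u v \<in> dual - {k} \<and> i (cdiv u v) = u)"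
    using fin by (simp add: sum.delta')
  also have "\<dots> = of_bool (op (Some u) (Some v) = Some char_one)"
  proof (cases "u = char_mult k v")
    case True then show ?thesis using eqk[OF u v] by (simp add: op_SS)
  next
    case False
    then have w: "cdiv u v \<in> dual - {k}" by (rule cdiv_in[OF u v])
    have "(cdiv u (i (cdiv u v)) = char_one) = (i (cdiv u v) = u)"
      using cdiv_one[OF P_in[OF w], of u] by auto
    then show ?thesis using False w by (simp add: op_SS)
  qed
  finally show ?thesis .
qed

lemma op_scale:
  assumes z: "z \<in> dual" and u: "u \<in> dual" and v: "v \<in> dual"
  shows "op (Some (char_mult z u)) (Some (char_mult z v)) = map_option (char_mult z) (op (Some u) (Some v))"
proof -
  have 1: "(char_mult z u = char_mult k (char_mult z v)) = (u = char_mult k v)"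
    using ch_nz[OF z] by (auto simp: fun_eq_iff char_mult_def field_simps)
  have 2: "cdiv (char_mult z u) (char_mult z v) = cdiv u v"
    using ch_nz[OF z] by (auto simp: fun_eq_iff cdiv_def char_mult_def char_inv_def field_simps)
  have 3: "cdiv (char_mult z u) (i w) = char_mult z (cdiv u (i w))" for w
    by (auto simp: fun_eq_iff cdiv_def char_mult_def char_inv_def field_simps)
  show ?thesis by (simp add: op_SS 1 2 3 del: oplus.simps)
qed

lemma op_scale_F:
  assumes z: "z \<in> dual" and u: "u \<in> Fset" and v: "v \<in> Fset"
  shows "op (map_option (char_mult z) u) (map_option (char_mult z) v) = map_option (char_mult z) (op u v)"
  using u v op_scale[OF z] by (auto simp: Fset_def)

lemma op_F: "u \<in> Fset \<Longrightarrow> v \<in> Fset \<Longrightarrow> op u v \<in> Fset"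
  by (auto simp: Fset_def dest: op_closed) (metis image_iff op_closed option.exhaust)

lemma mult_cancel_one: "z \<in> dual \<Longrightarrow> (char_mult z w = z) = (w = char_one)"
  using ch_nz[of z] by (auto simp: fun_eq_iff char_mult_def char_one_def)

lemma mult_inv_cdiv: "z \<in> dual \<Longrightarrow> char_mult z (cdiv a z) = a"
  using ch_nz[of z] by (auto simp: fun_eq_iff char_mult_def cdiv_def char_inv_def)

lemma C2:
  assumes a: "a \<in> dual" and b: "b \<in> dual" and z: "z \<in> dual"
  shows "N (cdiv a z) (cdiv b z) = of_bool (op (Some a) (Some b) = Some z)"
proof -
  have "op (Some a) (Some b) = map_option (char_mult z) (op (Some (cdiv a z)) (Some (cdiv b z)))"
    using op_scale[OF z cdiv_dual[OF a z] cdiv_dual[OF b z]] by (simp add: mult_inv_cdiv z)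
  then have "(op (Some a) (Some b) = Some z) = (op (Some (cdiv a z)) (Some (cdiv b z)) = Some char_one)"
    using mult_cancel_one[OF z] by (cases "op (Some (cdiv a z)) (Some (cdiv b z))") auto
  then show ?thesis by (simp add: C1 cdiv_dual a b z)
qed


lemma C3:
  assumes a: "a \<in> dual" and b: "b \<in> dual" and c: "c \<in> dual"
  shows "(\<Sum>s\<in>dual - {k}. of_bool (Q s = c) * (m * N (cdiv a (i s)) (cdiv b (i s)) - m * of_bool (cdiv b (i s) = char_one) - m * of_bool (cdiv a (i s) = char_one)))
    = m * of_bool (op (op (Some a) (Some b)) (Some c) = Some char_one) - m * of_bool (c = char_one \<and> a = char_mult k b) - m * N b c - m * N a c"
proof -
  have "(\<Sum>s\<in>dual - {k}. of_bool (Q s = c) * (m * N (cdiv a (i s)) (cdiv b (i s)) - m * of_bool (cdiv b (i s) = char_one) - m * of_bool (cdiv a (i s) = char_one)))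
     = (\<Sum>s\<in>dual - {k}. m * of_bool (Q s = c \<and> op (Some a) (Some b) = Some (i s)) - m * of_bool (i s = b \<and> Q s = c) - m * of_bool (i s = a \<and> Q s = c))"
    by (intro sum.cong refl) (auto simp: C2 cdiv_one P_in a b)
  also have "\<dots> = m * (\<Sum>s\<in>dual - {k}. of_bool (Q s = c \<and> op (Some a) (Some b) = Some (i s))) - m * N b c - m * N a c"
    by (simp add: sum_subtractf sum_distrib_left N_def)
  also have "(\<Sum>s\<in>dual - {k}. of_bool (Q s = c \<and> op (Some a) (Some b) = Some (i s)) :: complex)
     = of_bool (op (op (Some a) (Some b)) (Some c) = Some char_one) - of_bool (c = char_one \<and> a = char_mult k b)"
  proof (cases "op (Some a) (Some b)")
    case None
    then have "a = char_mult k b" by (simp add: op_SS split: if_splits)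
    then show ?thesis using None by simp
  next
    case (Some e)
    then have e: "e \<in> dual" using op_closed a b by blast
    have nk: "a \<noteq> char_mult k b" using Some by (simp add: op_SS split: if_splits)
    have "(\<Sum>s\<in>dual - {k}. of_bool (Q s = c \<and> op (Some a) (Some b) = Some (i s)) :: complex) = N e c"
      unfolding N_def using Some by (intro sum.cong refl) auto
    then show ?thesis using Some nk by (simp add: C1 e c)
  qed
  finally show ?thesis by (simp add: algebra_simps)
qed

lemma C4:
  assumes a: "a \<in> dual" and b: "b \<in> dual" and c: "c \<in> dual"
  shows "(\<Sum>t\<in>dual - {k}. of_bool (i t = a) * (m * N (cdiv b (Q t)) (cdiv c (Q t)) - m * of_bool (cdiv c (Q t) = char_one) - m * of_bool (cdiv b (Q t) = char_one)))
    = m * of_bool (op (Some a) (op (Some b) (Some c)) = Some char_one) - m * of_bool (a = char_one \<and> b = char_mult k c) - m * N a c - m * N a b"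
proof -
  have "(\<Sum>t\<in>dual - {k}. of_bool (i t = a) * (m * N (cdiv b (Q t)) (cdiv c (Q t)) - m * of_bool (cdiv c (Q t) = char_one) - m * of_bool (cdiv b (Q t) = char_one)))
     = (\<Sum>t\<in>dual - {k}. m * of_bool (i t = a \<and> op (Some b) (Some c) = Some (Q t)) - m * of_bool (i t = a \<and> Q t = c) - m * of_bool (i t = a \<and> Q t = b))"
    by (intro sum.cong refl) (auto simp: C2 cdiv_one Q_in b c)
  also have "\<dots> = m * (\<Sum>t\<in>dual - {k}. of_bool (i t = a \<and> op (Some b) (Some c) = Some (Q t))) - m * N a c - m * N a b"
    by (simp add: sum_subtractf sum_distrib_left N_def)
  also have "(\<Sum>t\<in>dual - {k}. of_bool (i t = a \<and> op (Some b) (Some c) = Some (Q t)) :: complex)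
     = of_bool (op (Some a) (op (Some b) (Some c)) = Some char_one) - of_bool (a = char_one \<and> b = char_mult k c)"
  proof (cases "op (Some b) (Some c)")
    case None
    then have "b = char_mult k c" by (simp add: op_SS split: if_splits)
    then show ?thesis using None by simp
  next
    case (Some e)
    then have e: "e \<in> dual" using op_closed b c by blast
    have nk: "b \<noteq> char_mult k c" using Some by (simp add: op_SS split: if_splits)
    have "(\<Sum>t\<in>dual - {k}. of_bool (i t = a \<and> op (Some b) (Some c) = Some (Q t)) :: complex) = N a e"
      unfolding N_def using Some by (intro sum.cong refl) auto
    then show ?thesis using Some nk by (simp add: C1 e a)
  qed
  finally show ?thesis by (simp add: algebra_simps)
qed

lemma invk: "a \<in> dual \<Longrightarrow> b \<in> dual \<Longrightarrow> (char_inv (char_mult (char_inv a) b) \<noteq> k) = (a \<noteq> char_mult k b)"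
  using ch_nz[of a] ch_nz[of b] by (auto simp: fun_eq_iff char_mult_def char_inv_def field_simps)

lemma key:
  assumes a: "a \<in> dual" and b: "b \<in> dual" and c: "c \<in> dual"
  shows "(op (op (Some a) (Some b)) (Some c) = Some char_one) = (op (Some a) (op (Some b) (Some c)) = Some char_one)"
proof -
  have B: "Jstar J x y * Jstar J (x + y) z = Jstar J x (y + z) * Jstar J y z" for x y z
    using J by (simp add: jacobi_function_def)
  have "(\<Sum>x\<in>UNIV. \<Sum>y\<in>UNIV. \<Sum>z\<in>UNIV. Jstar J x y * Jstar J (x+y) z * inverse (a x) * inverse (b y) * inverse (c z))
      = (\<Sum>x\<in>UNIV. \<Sum>y\<in>UNIV. \<Sum>z\<in>UNIV. Jstar J x (y+z) * Jstar J y z * inverse (a x) * inverse (b y) * inverse (c z))"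
    by (simp add: B)
  then have E: "m * of_bool (op (op (Some a) (Some b)) (Some c) = Some char_one) - m * of_bool (c = char_one \<and> a = char_mult k b) - m * N b c - m * N a c
      - m * of_bool (c = char_one) * (of_bool (a \<noteq> char_mult k b) - 2)
      - (m * N a b - m * of_bool (b = char_one) - m * of_bool (a = char_one))
    = m * of_bool (op (Some a) (op (Some b) (Some c)) = Some char_one) - m * of_bool (a = char_one \<and> b = char_mult k c) - m * N a c - m * N a b
      - (m * N b c - m * of_bool (c = char_one) - m * of_bool (b = char_one))
      - m * of_bool (a = char_one) * (of_bool (b \<noteq> char_mult k c) - 2)"
    by (simp only: TL[OF a b c] TR[OF a b c] C3[OF a b c] C4[OF a b c] invk a b c)
  then have "m * (of_bool (op (op (Some a) (Some b)) (Some c) = Some char_one) - of_bool (op (Some a) (op (Some b) (Some c)) = Some char_one)) = 0"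
    by (cases "c = char_one"; cases "a = char_one"; cases "a = char_mult k b"; cases "b = char_mult k c")
       (simp_all add: algebra_simps)
  then show ?thesis using m_nz by (auto split: if_splits)
qed

lemma assoc_dir:
  assumes a: "a \<in> dual" and b: "b \<in> dual" and c: "c \<in> dual"
    and L: "op (op (Some a) (Some b)) (Some c) = Some e" and e: "e \<in> dual"
  shows "op (Some a) (op (Some b) (Some c)) = Some e"
proof -
  define z where "z = char_inv e"
  have z: "z \<in> dual" using e by (simp add: z_def inv_dual)
  have F: "\<And>x. x \<in> dual \<Longrightarrow> Some x \<in> Fset" by (simp add: Fset_def)
  have sc: "map_option (char_mult z) (Some x) = Some (char_mult z x)" for x by simp
  have ze: "char_mult z e = char_one"
    using ch_nz[OF e] by (auto simp: z_def fun_eq_iff char_mult_def char_inv_def char_one_def)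
  have "op (op (Some (char_mult z a)) (Some (char_mult z b))) (Some (char_mult z c))
      = map_option (char_mult z) (op (op (Some a) (Some b)) (Some c))"
    by (simp only: sc[symmetric] op_scale_F[OF z] F a b c op_F)
  then have "op (op (Some (char_mult z a)) (Some (char_mult z b))) (Some (char_mult z c)) = Some char_one"
    using L ze by simp
  then have "op (Some (char_mult z a)) (op (Some (char_mult z b)) (Some (char_mult z c))) = Some char_one"
    using key[of "char_mult z a" "char_mult z b" "char_mult z c"] z a b c by (simp add: mult_dual)
  moreover have "op (Some (char_mult z a)) (op (Some (char_mult z b)) (Some (char_mult z c)))
      = map_option (char_mult z) (op (Some a) (op (Some b) (Some c)))"
    by (simp only: sc[symmetric] op_scale_F[OF z] F a b c op_F)
  ultimately have "map_option (char_mult z) (op (Some a) (op (Some b) (Some c))) = Some char_one" by simp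
  then obtain w where w: "op (Some a) (op (Some b) (Some c)) = Some w" and "char_mult z w = char_one" by auto
  then have "w = e" using ch_nz[OF e] by (auto simp: z_def fun_eq_iff char_mult_def char_inv_def char_one_def field_simps)
  with w show ?thesis by simp
qed

lemma assoc_dir2:
  assumes a: "a \<in> dual" and b: "b \<in> dual" and c: "c \<in> dual"
    and R: "op (Some a) (op (Some b) (Some c)) = Some e" and e: "e \<in> dual"
  shows "op (op (Some a) (Some b)) (Some c) = Some e"
proof -
  define z where "z = char_inv e"
  have z: "z \<in> dual" using e by (simp add: z_def inv_dual)
  have F: "\<And>x. x \<in> dual \<Longrightarrow> Some x \<in> Fset" by (simp add: Fset_def)
  have sc: "map_option (char_mult z) (Some x) = Some (char_mult z x)" for x by simp
  have ze: "char_mult z e = char_one"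
    using ch_nz[OF e] by (auto simp: z_def fun_eq_iff char_mult_def char_inv_def char_one_def)
  have "op (Some (char_mult z a)) (op (Some (char_mult z b)) (Some (char_mult z c)))
      = map_option (char_mult z) (op (Some a) (op (Some b) (Some c)))"
    by (simp only: sc[symmetric] op_scale_F[OF z] F a b c op_F)
  then have "op (Some (char_mult z a)) (op (Some (char_mult z b)) (Some (char_mult z c))) = Some char_one"
    using R ze by simp
  then have "op (op (Some (char_mult z a)) (Some (char_mult z b))) (Some (char_mult z c)) = Some char_one"
    using key[of "char_mult z a" "char_mult z b" "char_mult z c"] z a b c by (simp add: mult_dual)
  moreover have "op (op (Some (char_mult z a)) (Some (char_mult z b))) (Some (char_mult z c))
      = map_option (char_mult z) (op (op (Some a) (Some b)) (Some c))"
    by (simp only: sc[symmetric] op_scale_F[OF z] F a b c op_F)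
  ultimately have "map_option (char_mult z) (op (op (Some a) (Some b)) (Some c)) = Some char_one" by simp
  then obtain w where w: "op (op (Some a) (Some b)) (Some c) = Some w" and "char_mult z w = char_one" by auto
  then have "w = e" using ch_nz[OF e] by (auto simp: z_def fun_eq_iff char_mult_def char_inv_def char_one_def field_simps)
  with w show ?thesis by simp
qed

lemma assoc_SSS:
  assumes a: "a \<in> dual" and b: "b \<in> dual" and c: "c \<in> dual"
  shows "op (op (Some a) (Some b)) (Some c) = op (Some a) (op (Some b) (Some c))"
proof -
  have F: "\<And>x. x \<in> dual \<Longrightarrow> Some x \<in> Fset" by (simp add: Fset_def)
  have LF: "op (op (Some a) (Some b)) (Some c) \<in> Fset" using F a b c op_F by blast
  have RF: "op (Some a) (op (Some b) (Some c)) \<in> Fset" using F a b c op_F by blast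
  show ?thesis
  proof (cases "op (op (Some a) (Some b)) (Some c)")
    case None
    show ?thesis
    proof (cases "op (Some a) (op (Some b) (Some c))")
      case None2: None
      with None show ?thesis by simp
    next
      case (Some e)
      then have "e \<in> dual" using RF by (auto simp: Fset_def)
      with Some None assoc_dir2[OF a b c] show ?thesis by simp
    qed
  next
    case (Some e)
    then have "e \<in> dual" using LF by (auto simp: Fset_def)
    with Some assoc_dir[OF a b c] show ?thesis by simp
  qed
qed

lemma assoc_all: "\<forall>u\<in>(Fset :: ('a \<Rightarrow> complex) option set). \<forall>v\<in>Fset. \<forall>w\<in>Fset. op (op u v) w = op u (op v w)"
proof (intro ballI)
  fix u v w :: "('a \<Rightarrow> complex) option" assume u: "u \<in> Fset" and v: "v \<in> Fset" and w: "w \<in> Fset"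
  show "op (op u v) w = op u (op v w)"
  proof (cases u)
    case None then show ?thesis by simp
  next
    case (Some a)
    show ?thesis
    proof (cases v)
      case None then show ?thesis using Some by simp
    next
      case vS: (Some b)
      show ?thesis
      proof (cases w)
        case None then show ?thesis using Some vS by (cases "op (Some a) (Some b)") simp_all
      next
        case wS: (Some c)
        have "a \<in> dual" "b \<in> dual" "c \<in> dual" using u v w Some vS wS by (auto simp: Fset_def)
        then show ?thesis using Some vS wS assoc_SSS by simp
      qed
    qed
  qed
qed

end

theorem mainTheorem12:
  fixes J :: "'a::{finite,ab_group_add} \<Rightarrow> 'a \<Rightarrow> complex"
    and c :: "'a \<Rightarrow> complex"
    and i :: "('a \<Rightarrow> complex) \<Rightarrow> ('a \<Rightarrow> complex)"
  assumes J: "jacobi_function J"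
    and c: "c \<in> dual" and c2: "char_mult c c = char_one"
    and i_bij: "bij_betw i (dual - {c}) (dual - {char_one})"
    and i_sym: "\<forall>x\<in>dual - {c}. i x = char_mult x (i (char_inv x))"
    and J_eq: "\<forall>a b. J a b = (1 / of_nat (card (UNIV :: 'a set))) *
                 (\<Sum>x\<in>dual - {c}. i x a * char_mult (i x) (char_inv x) b)"
  shows "\<forall>u\<in>Fset. \<forall>v\<in>Fset. \<forall>w\<in>Fset. oplus c i (oplus c i u v) w = oplus c i u (oplus c i v w)"
proof -
  have "JS J c i" unfolding JS_def using J c c2 i_bij i_sym J_eq by blast
  then show ?thesis by (rule JS.assoc_all)
qed

end
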